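(* $\mathfrak{L}(\mathrm{rtDBVA}(1))=\mathfrak{L}(\mathrm{1DFAMW})$.
   Context: $\mathfrak{L}(A)$ denotes the class of languages recognized by machines of type $A$. A real-time deterministic blind vector automaton of dimension $k$ ($\mathrm{rtDBVA}(k)$) is a 6-tuple $(Q,\Sigma,\delta,q_0,Q_a,v)$ with finite state set $Q$, initial state $q_0$, accept states $Q_a$, initial row vector $v\in\mathbb{Q}^k$ (freely chosen), and $\delta:Q\times(\Sigma\cup\{\cent,\$\})\to Q\times S$, $S$ the set of $k\times k$ rational matrices; the input $w$ is read as $\cent w\$$ left to right, one symbol per step, and $\delta(q,\sigma)=(q',M)$ means that in state $q$ reading $\sigma$ the machine goes to $q'$ and multiplies its row vector on the right by $M$. The input is accepted iff after processing $\$$ the state is in $Q_a$ and the first vector entry equals $1$. A one-way deterministic finite automaton with multiplication without equality (1DFAMW) is a 6-tuple $(Q,\Sigma,\delta,q_0,Q_a,\Gamma)$ with $\Gamma$ a finite set of rationals and a rational register initially $1$; the tape holds $\cent w\$$; $\delta:Q\times(\Sigma\cup\{\cent,\$\})\to Q\times\{\downarrow,\rightarrow\}\times\Gamma$, and $\delta(q,\sigma)=(q',d,\gamma)$ means that in state $q$ reading $\sigma$ it goes to $q'$, keeps the head in place ($\downarrow$) or moves it one cell right ($\rightarrow$), and multiplies the register by $\gamma$. The input is accepted iff the machine enters an accept state with register value $1$ after scanning $\$$. *)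

theory Defs
  imports Complex_Main
begin

datatype 'a tsym = Cent | Dollar | Sym 'a

definition tape :: "'a list \<Rightarrow> 'a tsym list" where
  "tape w = Cent # map Sym w @ [Dollar]"

definition tape_syms :: "'a set \<Rightarrow> 'a tsym set" where
  "tape_syms \<Sigma> = Sym ` \<Sigma> \<union> {Cent, Dollar}"

text \<open>Row vectors of dimension k are functions nat => rat (entries 0..k-1),
  k x k matrices are functions nat => nat => rat (entries below k).\<close>

definition vec_mat_mult :: "nat \<Rightarrow> (nat \<Rightarrow> rat) \<Rightarrow> (nat \<Rightarrow> nat \<Rightarrow> rat) \<Rightarrow> (nat \<Rightarrow> rat)" where
  "vec_mat_mult k v M = (\<lambda>j. if j < k then (\<Sum>i<k. v i * M i j) else 0)"

definition is_vec :: "nat \<Rightarrow> (nat \<Rightarrow> rat) \<Rightarrow> bool" where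
  "is_vec k v \<longleftrightarrow> (\<forall>i\<ge>k. v i = 0)"

definition is_mat :: "nat \<Rightarrow> (nat \<Rightarrow> nat \<Rightarrow> rat) \<Rightarrow> bool" where
  "is_mat k M \<longleftrightarrow> (\<forall>i j. (k \<le> i \<or> k \<le> j) \<longrightarrow> M i j = 0)"

fun rtDBVA_run :: "nat \<Rightarrow> (nat \<Rightarrow> 'a tsym \<Rightarrow> nat \<times> (nat \<Rightarrow> nat \<Rightarrow> rat))
    \<Rightarrow> nat \<times> (nat \<Rightarrow> rat) \<Rightarrow> 'a tsym list \<Rightarrow> nat \<times> (nat \<Rightarrow> rat)" where
  "rtDBVA_run k \<delta> c [] = c"
| "rtDBVA_run k \<delta> (q, v) (s # ss) =
     rtDBVA_run k \<delta> (fst (\<delta> q s), vec_mat_mult k v (snd (\<delta> q s))) ss"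

definition rtDBVA_wf ::
  "nat \<Rightarrow> 'a set \<Rightarrow> nat set \<Rightarrow> (nat \<Rightarrow> 'a tsym \<Rightarrow> nat \<times> (nat \<Rightarrow> nat \<Rightarrow> rat))
     \<Rightarrow> nat \<Rightarrow> nat set \<Rightarrow> (nat \<Rightarrow> rat) \<Rightarrow> bool" where
  "rtDBVA_wf k \<Sigma> Q \<delta> q0 Qa v \<longleftrightarrow>
     finite Q \<and> q0 \<in> Q \<and> Qa \<subseteq> Q \<and> is_vec k v \<and>
     (\<forall>q\<in>Q. \<forall>s\<in>tape_syms \<Sigma>. fst (\<delta> q s) \<in> Q \<and> is_mat k (snd (\<delta> q s)))"

definition rtDBVA_accepts ::
  "nat \<Rightarrow> (nat \<Rightarrow> 'a tsym \<Rightarrow> nat \<times> (nat \<Rightarrow> nat \<Rightarrow> rat)) \<Rightarrow> nat \<Rightarrow> nat set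
     \<Rightarrow> (nat \<Rightarrow> rat) \<Rightarrow> 'a list \<Rightarrow> bool" where
  "rtDBVA_accepts k \<delta> q0 Qa v w \<longleftrightarrow>
     (let (q, u) = rtDBVA_run k \<delta> (q0, v) (tape w) in q \<in> Qa \<and> u 0 = 1)"

definition rtDBVA_langs :: "nat \<Rightarrow> 'a set \<Rightarrow> 'a list set set" where
  "rtDBVA_langs k \<Sigma> = {L. \<exists>Q \<delta> q0 Qa v. rtDBVA_wf k \<Sigma> Q \<delta> q0 Qa v \<and>
       L = {w \<in> lists \<Sigma>. rtDBVA_accepts k \<delta> q0 Qa v w}}"

datatype dir = Stay | Right

text \<open>Configuration: (state, head position on the tape, register value).
  Once the head has moved off the right end (past the dollar) the machine
  has halted; the step function is then the identity.\<close>
definition DFAMW_step :: "(nat \<Rightarrow> 'a tsym \<Rightarrow> nat \<times> dir \<times> rat) \<Rightarrow> 'a tsym list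
    \<Rightarrow> nat \<times> nat \<times> rat \<Rightarrow> nat \<times> nat \<times> rat" where
  "DFAMW_step \<delta> t c = (case c of (q, i, r) \<Rightarrow>
     if i < length t then
       (case \<delta> q (t ! i) of (q', d, \<gamma>) \<Rightarrow>
          (q', (if d = Right then Suc i else i), r * \<gamma>))
     else c)"

definition DFAMW_wf ::
  "'a set \<Rightarrow> nat set \<Rightarrow> (nat \<Rightarrow> 'a tsym \<Rightarrow> nat \<times> dir \<times> rat) \<Rightarrow> nat \<Rightarrow> nat set
     \<Rightarrow> rat set \<Rightarrow> bool" where
  "DFAMW_wf \<Sigma> Q \<delta> q0 Qa \<Gamma> \<longleftrightarrow>
     finite Q \<and> q0 \<in> Q \<and> Qa \<subseteq> Q \<and> finite \<Gamma> \<and>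
     (\<forall>q\<in>Q. \<forall>s\<in>tape_syms \<Sigma>. fst (\<delta> q s) \<in> Q \<and> snd (snd (\<delta> q s)) \<in> \<Gamma>)"

definition DFAMW_accepts ::
  "(nat \<Rightarrow> 'a tsym \<Rightarrow> nat \<times> dir \<times> rat) \<Rightarrow> nat \<Rightarrow> nat set \<Rightarrow> 'a list \<Rightarrow> bool" where
  "DFAMW_accepts \<delta> q0 Qa w \<longleftrightarrow>
     (\<exists>n. case (DFAMW_step \<delta> (tape w) ^^ n) (q0, 0, 1) of (q, i, r) \<Rightarrow>
            i = length (tape w) \<and> q \<in> Qa \<and> r = 1)"

definition DFAMW_langs :: "'a set \<Rightarrow> 'a list set set" where
  "DFAMW_langs \<Sigma> = {L. \<exists>Q \<delta> q0 Qa \<Gamma>. DFAMW_wf \<Sigma> Q \<delta> q0 Qa \<Gamma> \<and>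
       L = {w \<in> lists \<Sigma>. DFAMW_accepts \<delta> q0 Qa w}}"

end

theory Submission
  imports Defs
begin

fun sr :: "(nat \<Rightarrow> 'a tsym \<Rightarrow> nat \<times> rat) \<Rightarrow> nat \<times> rat \<Rightarrow> 'a tsym list \<Rightarrow> nat \<times> rat" where
  "sr f c [] = c"
| "sr f (q, x) (s # ss) = sr f (fst (f q s), x * snd (f q s)) ss"

lemma run_sr:
  "fst (rtDBVA_run 1 \<delta> (q, v) ss) = fst (sr (\<lambda>q s. (fst (\<delta> q s), snd (\<delta> q s) 0 0)) (q, v 0) ss) \<and>
   snd (rtDBVA_run 1 \<delta> (q, v) ss) 0 = snd (sr (\<lambda>q s. (fst (\<delta> q s), snd (\<delta> q s) 0 0)) (q, v 0) ss)"
  by (induction ss arbitrary: q v) (simp_all add: vec_mat_mult_def)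

lemma acc_sr: "rtDBVA_accepts 1 \<delta> q0 Qa v w \<longleftrightarrow>
  (case sr (\<lambda>q s. (fst (\<delta> q s), snd (\<delta> q s) 0 0)) (q0, v 0) (tape w) of (q', x) \<Rightarrow> q' \<in> Qa \<and> x = 1)"
proof -
  obtain a b where ab: "rtDBVA_run 1 \<delta> (q0, v) (tape w) = (a, b)" by fastforce
  obtain c d where cd: "sr (\<lambda>q s. (fst (\<delta> q s), snd (\<delta> q s) 0 0)) (q0, v 0) (tape w) = (c, d)" by fastforce
  show ?thesis using run_sr[of \<delta> q0 v "tape w"] ab cd by (simp add: rtDBVA_accepts_def)
qed

lemma sr_zero: "snd (sr f (q, 0) ss) = 0"
  by (induction ss arbitrary: q) auto

lemma sr_cong: "(\<And>q s. s \<in> set ss \<Longrightarrow> f q s = g q s) \<Longrightarrow> sr f c ss = sr g c ss"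
proof (induction ss arbitrary: c)
  case Nil then show ?case by simp
next
  case (Cons a ss)
  obtain q x where c: "c = (q, x)" by fastforce
  show ?case using Cons by (simp add: c)
qed

fun chst :: "(nat \<Rightarrow> 'a tsym \<Rightarrow> nat \<times> dir \<times> rat) \<Rightarrow> 'a tsym \<Rightarrow> nat \<Rightarrow> nat \<Rightarrow> nat \<times> rat" where
  "chst \<delta> s 0 q = (q, 1)"
| "chst \<delta> s (Suc m) q = (fst (chst \<delta> s m (fst (\<delta> q s))),
      snd (snd (\<delta> q s)) * snd (chst \<delta> s m (fst (\<delta> q s))))"

definition dirat :: "(nat \<Rightarrow> 'a tsym \<Rightarrow> nat \<times> dir \<times> rat) \<Rightarrow> 'a tsym \<Rightarrow> nat \<Rightarrow> nat \<Rightarrow> dir" where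
  "dirat \<delta> s m q = fst (snd (\<delta> (fst (chst \<delta> s m q)) s))"

lemma lemA:
  assumes "i < length t" "t ! i = s"
  shows "(\<forall>k<m. dirat \<delta> s k q = Stay) \<Longrightarrow>
     (DFAMW_step \<delta> t ^^ m) (q, i, r) = (fst (chst \<delta> s m q), i, r * snd (chst \<delta> s m q))"
proof (induction m arbitrary: q r)
  case 0 then show ?case by simp
next
  case (Suc m)
  obtain q1 d g where dq: "\<delta> q s = (q1, d, g)" by (metis prod.exhaust)
  have "dirat \<delta> s 0 q = Stay" using Suc.prems by auto
  then have d: "d = Stay" using dq by (simp add: dirat_def)
  have st: "DFAMW_step \<delta> t (q, i, r) = (q1, i, r * g)"
    using assms dq d by (simp add: DFAMW_step_def)
  have "\<forall>k<m. dirat \<delta> s k q1 = Stay"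
  proof (intro allI impI)
    fix k assume "k < m"
    then have "dirat \<delta> s (Suc k) q = Stay" using Suc.prems by auto
    then show "dirat \<delta> s k q1 = Stay" using dq by (simp add: dirat_def)
  qed
  then have "(DFAMW_step \<delta> t ^^ m) (q1, i, r * g) = (fst (chst \<delta> s m q1), i, r * g * snd (chst \<delta> s m q1))"
    using Suc.IH by blast
  have "(DFAMW_step \<delta> t ^^ Suc m) (q, i, r) = (DFAMW_step \<delta> t ^^ m) (DFAMW_step \<delta> t (q, i, r))"
    by (simp only: funpow_Suc_right comp_apply)
  then show ?case using st dq \<open>(DFAMW_step \<delta> t ^^ m) (q1, i, r * g) = _\<close> by (simp add: mult.assoc)
qed

definition D :: "(nat \<Rightarrow> 'a tsym \<Rightarrow> nat \<times> dir \<times> rat) \<Rightarrow> nat \<Rightarrow> 'a tsym \<Rightarrow> nat \<times> rat" where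
  "D \<delta> q s = (if \<exists>m. dirat \<delta> s m q = Right then
      (let m = (LEAST m. dirat \<delta> s m q = Right); p = fst (chst \<delta> s m q) in
        (fst (\<delta> p s), snd (chst \<delta> s m q) * snd (snd (\<delta> p s))))
    else (q, 0))"

definition Acc :: "(nat \<Rightarrow> 'a tsym \<Rightarrow> nat \<times> dir \<times> rat) \<Rightarrow> 'a tsym list \<Rightarrow> nat set \<Rightarrow> nat \<times> nat \<times> rat \<Rightarrow> bool" where
  "Acc \<delta> t Qa c \<longleftrightarrow> (\<exists>n. case (DFAMW_step \<delta> t ^^ n) c of (q, i, r) \<Rightarrow> i = length t \<and> q \<in> Qa \<and> r = 1)"

lemma fixp: "(DFAMW_step \<delta> t ^^ n) (q, length t, r) = (q, length t, r)"
  by (induction n) (simp_all add: DFAMW_step_def)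

lemma Acc_shift: "Acc \<delta> t Qa c \<longleftrightarrow> Acc \<delta> t Qa ((DFAMW_step \<delta> t ^^ N) c)"
proof
  assume "Acc \<delta> t Qa c"
  from this[unfolded Acc_def] obtain n where n: "case (DFAMW_step \<delta> t ^^ n) c of (q, i, r) \<Rightarrow> i = length t \<and> q \<in> Qa \<and> r = 1"
    ..
  obtain q i r where e: "(DFAMW_step \<delta> t ^^ n) c = (q, i, r)" by (metis prod.exhaust)
  have "(DFAMW_step \<delta> t ^^ n) ((DFAMW_step \<delta> t ^^ N) c) = (DFAMW_step \<delta> t ^^ N) ((DFAMW_step \<delta> t ^^ n) c)"
    by (metis funpow_add add.commute comp_apply)
  also have "\<dots> = (q, i, r)" using e n fixp[where \<delta>=\<delta> and t=t and n=N and q=q and r=r] by simp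
  finally show "Acc \<delta> t Qa ((DFAMW_step \<delta> t ^^ N) c)" unfolding Acc_def using n e by (metis (no_types))
next
  assume "Acc \<delta> t Qa ((DFAMW_step \<delta> t ^^ N) c)"
  from this[unfolded Acc_def] obtain n where "case (DFAMW_step \<delta> t ^^ n) ((DFAMW_step \<delta> t ^^ N) c) of (q, i, r) \<Rightarrow> i = length t \<and> q \<in> Qa \<and> r = 1"
    ..
  then show "Acc \<delta> t Qa c" unfolding Acc_def by (metis funpow_add comp_apply)
qed

lemma notR: "d \<noteq> Right \<Longrightarrow> d = Stay" by (cases d) auto

lemma main:
  "i \<le> length t \<Longrightarrow> Acc \<delta> t Qa (q, i, r) \<longleftrightarrow>
     (case sr (D \<delta>) (q, r) (drop i t) of (q', x) \<Rightarrow> q' \<in> Qa \<and> x = 1)"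
proof (induction "length t - i" arbitrary: i q r)
  case 0
  then have i: "i = length t" by simp
  show ?case using fixp[where \<delta>=\<delta> and t=t and q=q and r=r] by (simp add: Acc_def i)
next
  case (Suc n)
  then have il: "i < length t" by simp
  define s where "s = t ! i"
  have dr: "drop i t = s # drop (Suc i) t" using il s_def by (simp add: Cons_nth_drop_Suc)
  show ?case
  proof (cases "\<exists>m. dirat \<delta> s m q = Right")
    case True
    define m where "m = (LEAST m. dirat \<delta> s m q = Right)"
    have mR: "dirat \<delta> s m q = Right" unfolding m_def using True by (rule LeastI_ex)
    have before: "\<forall>k<m. dirat \<delta> s k q = Stay"
      using not_less_Least[of _ "\<lambda>m. dirat \<delta> s m q = Right"] notR unfolding m_def by blast
    define p where "p = fst (chst \<delta> s m q)"
    have Dq: "D \<delta> q s = (fst (\<delta> p s), snd (chst \<delta> s m q) * snd (snd (\<delta> p s)))"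
      using True unfolding D_def m_def p_def by (simp add: Let_def)
    have A: "(DFAMW_step \<delta> t ^^ m) (q, i, r) = (p, i, r * snd (chst \<delta> s m q))"
      using lemA[OF il s_def[symmetric] before] p_def by simp
    obtain q1 d g where dp: "\<delta> p s = (q1, d, g)" by (metis prod.exhaust)
    have d: "d = Right" using mR dp by (simp add: dirat_def p_def)
    have B: "(DFAMW_step \<delta> t ^^ Suc m) (q, i, r) = (q1, Suc i, r * snd (chst \<delta> s m q) * g)"
      using A il dp d s_def by (simp add: DFAMW_step_def)
    have "Acc \<delta> t Qa (q, i, r) \<longleftrightarrow> Acc \<delta> t Qa (q1, Suc i, r * snd (chst \<delta> s m q) * g)"
      using Acc_shift[of \<delta> t Qa "(q, i, r)" "Suc m"] B by simp
    also have "\<dots> \<longleftrightarrow> (case sr (D \<delta>) (q1, r * snd (chst \<delta> s m q) * g) (drop (Suc i) t) of (q', x) \<Rightarrow> q' \<in> Qa \<and> x = 1)"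
      using Suc.hyps(1)[of "Suc i"] Suc.hyps(2) il by simp
    also have "\<dots> \<longleftrightarrow> (case sr (D \<delta>) (q, r) (drop i t) of (q', x) \<Rightarrow> q' \<in> Qa \<and> x = 1)"
      using Dq dp by (simp add: dr mult.assoc)
    finally show ?thesis .
  next
    case False
    then have allS: "\<forall>k. dirat \<delta> s k q = Stay" using notR by blast
    have "\<not> Acc \<delta> t Qa (q, i, r)"
    proof
      assume "Acc \<delta> t Qa (q, i, r)"
      from this[unfolded Acc_def] obtain m where "case (DFAMW_step \<delta> t ^^ m) (q, i, r) of (q, i, r) \<Rightarrow> i = length t \<and> q \<in> Qa \<and> r = 1"
        ..
      then show False using lemA[OF il s_def[symmetric], where m=m and \<delta>=\<delta> and q=q and r=r] allS il by simp
    qed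
    moreover have "D \<delta> q s = (q, 0)" using False unfolding D_def by simp
    moreover have "snd (sr (D \<delta>) (q, 0) (drop (Suc i) t)) = 0" by (rule sr_zero)
    ultimately show ?thesis by (cases "sr (D \<delta>) (q, 0) (drop (Suc i) t)") (simp add: dr)
  qed
qed

lemma chst_in: "q \<in> Q \<Longrightarrow> (\<forall>q\<in>Q. fst (\<delta> q s) \<in> Q) \<Longrightarrow> fst (chst \<delta> s m q) \<in> Q"
  by (induction m arbitrary: q) auto

definition matc :: "rat \<Rightarrow> nat \<Rightarrow> nat \<Rightarrow> rat" where
  "matc c = (\<lambda>i j. if i = 0 \<and> j = 0 then c else 0)"

lemma dir2: "DFAMW_langs \<Sigma> \<subseteq> rtDBVA_langs 1 \<Sigma>"
proof
  fix L assume "L \<in> DFAMW_langs \<Sigma>"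
  then obtain Q \<delta> q0 Qa \<Gamma> where wf: "DFAMW_wf \<Sigma> Q \<delta> q0 Qa \<Gamma>"
    and L: "L = {w \<in> lists \<Sigma>. DFAMW_accepts \<delta> q0 Qa w}" unfolding DFAMW_langs_def by blast
  define \<delta>' where "\<delta>' = (\<lambda>q s. (fst (D \<delta> q s), matc (snd (D \<delta> q s))))"
  define v :: "nat \<Rightarrow> rat" where "v = (\<lambda>i. if i = 0 then 1 else 0)"
  have "rtDBVA_wf 1 \<Sigma> Q \<delta>' q0 Qa v"
    unfolding rtDBVA_wf_def
  proof (intro conjI ballI)
    show "finite Q" "q0 \<in> Q" "Qa \<subseteq> Q" using wf by (auto simp: DFAMW_wf_def)
    show "is_vec 1 v" by (simp add: is_vec_def v_def)
    fix q s assume q: "q \<in> Q" and s: "s \<in> tape_syms \<Sigma>"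
    show "is_mat 1 (snd (\<delta>' q s))" by (auto simp: is_mat_def \<delta>'_def matc_def)
    have cl: "\<forall>q\<in>Q. fst (\<delta> q s) \<in> Q" using wf s by (auto simp: DFAMW_wf_def)
    show "fst (\<delta>' q s) \<in> Q"
      using chst_in[where Q=Q and \<delta>=\<delta> and s=s, OF q cl] cl q by (auto simp: \<delta>'_def D_def Let_def)
  qed
  moreover have "\<forall>w. DFAMW_accepts \<delta> q0 Qa w = rtDBVA_accepts 1 \<delta>' q0 Qa v w"
  proof
    fix w :: "'a list"
    have f: "(\<lambda>q s. (fst (\<delta>' q s), snd (\<delta>' q s) 0 0)) = D \<delta>"
      by (auto simp: \<delta>'_def matc_def)
    have "DFAMW_accepts \<delta> q0 Qa w = Acc \<delta> (tape w) Qa (q0, 0, 1)"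
      by (simp add: DFAMW_accepts_def Acc_def)
    also have "\<dots> = (case sr (D \<delta>) (q0, 1) (tape w) of (q', x) \<Rightarrow> q' \<in> Qa \<and> x = 1)"
      using main[where i=0 and t="tape w" and \<delta>=\<delta> and Qa=Qa and q=q0 and r=1] by simp
    also have "\<dots> = rtDBVA_accepts 1 \<delta>' q0 Qa v w"
      unfolding acc_sr f by (simp add: v_def)
    finally show "DFAMW_accepts \<delta> q0 Qa w = rtDBVA_accepts 1 \<delta>' q0 Qa v w" .
  qed
  ultimately show "L \<in> rtDBVA_langs 1 \<Sigma>" unfolding rtDBVA_langs_def L by blast
qed

lemma finite_tape_syms: "finite \<Sigma> \<Longrightarrow> finite (tape_syms \<Sigma>)"
  by (simp add: tape_syms_def)

lemma dir1:
  assumes fin: "finite \<Sigma>"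
  shows "rtDBVA_langs 1 \<Sigma> \<subseteq> DFAMW_langs \<Sigma>"
proof
  fix L assume "L \<in> rtDBVA_langs 1 \<Sigma>"
  then obtain Q \<delta> q0 Qa v where wf: "rtDBVA_wf 1 \<Sigma> Q \<delta> q0 Qa v"
    and L: "L = {w \<in> lists \<Sigma>. rtDBVA_accepts 1 \<delta> q0 Qa v w}" unfolding rtDBVA_langs_def by blast
  define \<delta>' where "\<delta>' = (\<lambda>q s. (fst (\<delta> q s), Right, (if s = Cent then v 0 else 1) * snd (\<delta> q s) 0 0))"
  define \<Gamma> where "\<Gamma> = (\<lambda>(q, s). snd (snd (\<delta>' q s))) ` (Q \<times> tape_syms \<Sigma>)"
  have "DFAMW_wf \<Sigma> Q \<delta>' q0 Qa \<Gamma>"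
    unfolding DFAMW_wf_def
  proof (intro conjI ballI)
    show "finite Q" "q0 \<in> Q" "Qa \<subseteq> Q" using wf by (auto simp: rtDBVA_wf_def)
    show "finite \<Gamma>" unfolding \<Gamma>_def using wf fin finite_tape_syms by (auto simp: rtDBVA_wf_def)
    fix q s assume q: "q \<in> Q" and s: "s \<in> tape_syms \<Sigma>"
    show "fst (\<delta>' q s) \<in> Q" using wf q s by (auto simp: rtDBVA_wf_def \<delta>'_def)
    show "snd (snd (\<delta>' q s)) \<in> \<Gamma>" unfolding \<Gamma>_def using q s by force
  qed
  moreover have "\<forall>w. rtDBVA_accepts 1 \<delta> q0 Qa v w = DFAMW_accepts \<delta>' q0 Qa w"
  proof
    fix w :: "'a list"
    define E where "E = (\<lambda>q s. (fst (\<delta> q s), snd (\<delta> q s) 0 0))"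
    have DE: "D \<delta>' q s = (fst (\<delta> q s), (if s = Cent then v 0 else 1) * snd (\<delta> q s) 0 0)" for q s
    proof -
      have ex: "\<exists>m. dirat \<delta>' s m q = Right" by (rule exI[of _ 0]) (simp add: dirat_def \<delta>'_def)
      have "(LEAST m. dirat \<delta>' s m q = Right) = 0" by (rule Least_eq_0) (simp add: dirat_def \<delta>'_def)
      then show ?thesis using ex by (simp add: D_def \<delta>'_def)
    qed
    define rest where "rest = map Sym w @ [Dollar]"
    have tw: "tape w = Cent # rest" by (simp add: tape_def rest_def)
    have nc: "Cent \<notin> set rest" by (auto simp: rest_def)
    have cong: "sr (D \<delta>') c rest = sr E c rest" for c :: "nat \<times> rat"
      by (rule sr_cong) (use nc in \<open>auto simp: DE E_def\<close>)
    have "DFAMW_accepts \<delta>' q0 Qa w = Acc \<delta>' (tape w) Qa (q0, 0, 1)"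
      by (simp add: DFAMW_accepts_def Acc_def)
    also have "\<dots> = (case sr (D \<delta>') (q0, 1) (tape w) of (q', x) \<Rightarrow> q' \<in> Qa \<and> x = 1)"
      using main[where i=0 and t="tape w" and \<delta>="\<delta>'" and Qa=Qa and q=q0 and r=1] by simp
    also have "\<dots> = (case sr E (q0, v 0) (tape w) of (q', x) \<Rightarrow> q' \<in> Qa \<and> x = 1)"
      by (simp add: tw cong DE E_def)
    also have "\<dots> = rtDBVA_accepts 1 \<delta> q0 Qa v w"
      unfolding acc_sr E_def ..
    finally show "rtDBVA_accepts 1 \<delta> q0 Qa v w = DFAMW_accepts \<delta>' q0 Qa w" by simp
  qed
  ultimately show "L \<in> DFAMW_langs \<Sigma>" unfolding DFAMW_langs_def L by blast
qed

theorem theorem9: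
  fixes \<Sigma> :: "'a set"
  assumes "finite \<Sigma>"
  shows "rtDBVA_langs 1 \<Sigma> = DFAMW_langs \<Sigma>"
  using dir1[OF assms] dir2 by blast

end
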